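(* Let $n\geqslant 2$ and let $\alpha,\beta\in\mathcal{AO}_n$ be two elements of rank $n-1$. Then $\alpha\mathscr{J}\beta$ in the monoid $\mathcal{AO}_n$ if and only if $\mathrm{d}(\alpha)$ and $\mathrm{d}(\beta)$ have the same parity.
   Context: Let $\Omega_n=\{1<2<\cdots<n\}$. $\mathcal{I}_n$ denotes the symmetric inverse monoid of all partial injective maps of $\Omega_n$, maps written on the right and composed left to right; the rank of $\alpha$ is $|\mathrm{Im}(\alpha)|$. $\mathcal{AI}_n$ is the set of all $\alpha\in\mathcal{I}_n$ with $\alpha=\sigma|_{\mathrm{Dom}(\alpha)}$ for some even permutation $\sigma$ of $\Omega_n$. $\mathcal{POI}_n$ is the set of order-preserving elements of $\mathcal{I}_n$ and $\mathcal{AO}_n=\mathcal{AI}_n\cap\mathcal{POI}_n$ (a monoid). For $\alpha$ of rank $n-1$, $\mathrm{d}(\alpha)$ is the unique element of $\Omega_n\setminus\mathrm{Dom}(\alpha)$. $\mathscr{J}$ is Green's relation: $a\mathscr{J}b$ iff $MaM=MbM$ in the monoid $M$. *)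

theory Defs
  imports "HOL-Combinatorics.Permutations"
begin

definition I_n :: "nat \<Rightarrow> (nat \<rightharpoonup> nat) set" where
  "I_n n = {\<alpha>. dom \<alpha> \<subseteq> {1..n} \<and> ran \<alpha> \<subseteq> {1..n} \<and> inj_on \<alpha> (dom \<alpha>)}"

text \<open>Product written on the right, composed left to right: x(\<alpha>\<beta>) = (x\<alpha>)\<beta>.\<close>
definition pmult :: "(nat \<rightharpoonup> nat) \<Rightarrow> (nat \<rightharpoonup> nat) \<Rightarrow> (nat \<rightharpoonup> nat)" where
  "pmult \<alpha> \<beta> = \<beta> \<circ>\<^sub>m \<alpha>"

definition prank :: "(nat \<rightharpoonup> nat) \<Rightarrow> nat" where
  "prank \<alpha> = card (ran \<alpha>)"

definition AI_n :: "nat \<Rightarrow> (nat \<rightharpoonup> nat) set" where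
  "AI_n n = {\<alpha> \<in> I_n n. \<exists>\<sigma>. \<sigma> permutes {1..n} \<and> evenperm \<sigma> \<and>
                           (\<forall>x \<in> dom \<alpha>. \<alpha> x = Some (\<sigma> x))}"

definition POI_n :: "nat \<Rightarrow> (nat \<rightharpoonup> nat) set" where
  "POI_n n = {\<alpha> \<in> I_n n. \<forall>x \<in> dom \<alpha>. \<forall>y \<in> dom \<alpha>. x < y \<longrightarrow> the (\<alpha> x) < the (\<alpha> y)}"

definition AO_n :: "nat \<Rightarrow> (nat \<rightharpoonup> nat) set" where
  "AO_n n = AI_n n \<inter> POI_n n"

text \<open>d(\<alpha>): the unique element of Omega_n not in Dom(\<alpha>) (for rank n-1).\<close>
definition dpt :: "nat \<Rightarrow> (nat \<rightharpoonup> nat) \<Rightarrow> nat" where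
  "dpt n \<alpha> = (THE x. x \<in> {1..n} \<and> x \<notin> dom \<alpha>)"

definition AO_ideal :: "nat \<Rightarrow> (nat \<rightharpoonup> nat) \<Rightarrow> (nat \<rightharpoonup> nat) set" where
  "AO_ideal n a = {pmult (pmult s a) t | s t. s \<in> AO_n n \<and> t \<in> AO_n n}"

definition J_AO :: "nat \<Rightarrow> (nat \<rightharpoonup> nat) \<Rightarrow> (nat \<rightharpoonup> nat) \<Rightarrow> bool" where
  "J_AO n a b \<longleftrightarrow> AO_ideal n a = AO_ideal n b"

end

theory Submission
  imports Defs
begin

definition S :: "nat \<Rightarrow> nat \<Rightarrow> nat \<Rightarrow> nat" where
  "S i j x = (if x = i then j else if i \<le> j \<and> i < x \<and> x \<le> j then x - 1
     else if j < i \<and> j \<le> x \<and> x < i then x + 1 else x)"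

lemma S_inv: "S j i (S i j x) = x"
  unfolding S_def by auto

lemma S_same: "S i i = id"
  unfolding S_def by auto

lemma S_at: "S i j i = j"
  unfolding S_def by auto

lemma S_mono: "x \<noteq> i \<Longrightarrow> y \<noteq> i \<Longrightarrow> x < y \<Longrightarrow> S i j x < S i j y"
  unfolding S_def by auto

lemma S_permutes:
  assumes "i \<in> {a..b}" "j \<in> {a..b}"
  shows "S i j permutes {a..b}"
proof (rule bij_imp_permutes)
  show "bij_betw (S i j) {a..b} {a..b}"
    apply (rule bij_betw_byWitness[where f'="S j i"])
    using S_inv assms unfolding S_def by auto
  show "S i j x = x" if "x \<notin> {a..b}" for x
    using that assms unfolding S_def by auto
qed

lemma S_permutation: "permutation (S i j)"
  using S_permutes[of i 0 "max i j" j] permutes_imp_permutation by fastforce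

lemma S_step: "i \<le> j \<Longrightarrow> S i (Suc j) = transpose j (Suc j) \<circ> S i j"
  by (rule ext) (auto simp: S_def transpose_def)

lemma S_even_le: "evenperm (S i (i + d)) \<longleftrightarrow> even d"
proof (induction d)
  case 0 then show ?case by (simp add: S_same)
next
  case (Suc d)
  have eq: "S i (i + Suc d) = transpose (i+d) (Suc (i+d)) \<circ> S i (i+d)"
    using S_step[of i "i+d"] by simp
  have e: "evenperm (transpose (i+d) (Suc (i+d)) \<circ> S i (i+d)) = (evenperm (transpose (i+d) (Suc (i+d))) = evenperm (S i (i+d)))"
    by (rule evenperm_comp[OF permutation_swap_id S_permutation])
  have "\<not> evenperm (transpose (i+d) (Suc (i+d)))" using evenperm_swap[of "i+d" "Suc (i+d)"] by simp
  then show ?case unfolding eq e using Suc.IH by simp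
qed

lemma S_even: "evenperm (S i j) \<longleftrightarrow> (even i \<longleftrightarrow> even j)"
proof (cases "i \<le> j")
  case True
  then show ?thesis using S_even_le[of i "j - i"] by auto
next
  case False
  have "S i j \<circ> S j i = id" using S_inv by (auto simp: fun_eq_iff)
  then have "evenperm (S i j) = evenperm (S j i)"
    using evenperm_comp[OF S_permutation S_permutation, of i j j i] by simp
  then show ?thesis using S_even_le[of j "i - j"] False by auto
qed


definition smono :: "nat set \<Rightarrow> (nat \<Rightarrow> nat) \<Rightarrow> bool" where
  "smono A f \<longleftrightarrow> (\<forall>x\<in>A. \<forall>y\<in>A. x < y \<longrightarrow> f x < f y)"

lemma smono_subset: "smono A f \<Longrightarrow> B \<subseteq> A \<Longrightarrow> smono B f"
  unfolding smono_def by blast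

lemma uniq_aux:
  assumes "smono A f" "smono A g" "f ` A = g ` A" "x \<in> A"
    "\<forall>y\<in>A. y < x \<longrightarrow> f y = g y"
  shows "\<not> f x < g x"
proof
  assume lt: "f x < g x"
  obtain y where y: "y \<in> A" "f x = g y" using assms(3,4) by blast
  show False
  proof (cases y x rule: linorder_cases)
    case less
    then have "f y = f x" using assms(5) y by auto
    moreover have "f y < f x" using assms(1,4) y(1) less unfolding smono_def by blast
    ultimately show False by simp
  next
    case equal then show False using lt y by simp
  next
    case greater
    then have "g x < g y" using assms(2,4) y unfolding smono_def by auto
    then show False using lt y by simp
  qed
qed

lemma uniq:
  assumes "smono A f" "smono A g" "f ` A = g ` A"
  shows "\<forall>x\<in>A. f x = g x"
proof (rule ccontr)
  assume "\<not> ?thesis"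
  then have ex: "\<exists>x. x \<in> A \<and> f x \<noteq> g x" by auto
  define x where "x = (LEAST x. x \<in> A \<and> f x \<noteq> g x)"
  have x: "x \<in> A" "f x \<noteq> g x" using LeastI_ex[OF ex] unfolding x_def by auto
  have below: "\<forall>y\<in>A. y < x \<longrightarrow> f y = g y"
  proof (intro ballI impI)
    fix y assume "y \<in> A" "y < x"
    then show "f y = g y" using not_less_Least[of y "\<lambda>x. x \<in> A \<and> f x \<noteq> g x"] unfolding x_def by blast
  qed
  have "\<not> f x < g x" by (rule uniq_aux[OF assms x(1) below])
  moreover have "\<not> g x < f x"
    by (rule uniq_aux[OF assms(2,1) assms(3)[symmetric] x(1)]) (use below in auto)
  ultimately show False using x(2) by simp
qed

lemma permutes_image_minus:
  assumes "p permutes A" shows "p ` (A - {a}) = A - {p a}"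
proof -
  have "inj p" using assms permutes_inj by blast
  then have "p ` (A - {a}) = p ` A - p ` {a}" by (simp add: image_set_diff)
  then show ?thesis using permutes_image[OF assms] by simp
qed

lemma S_smono: "smono (A - {i}) (S i j)"
  unfolding smono_def using S_mono by auto

lemma parity:
  assumes "\<sigma> permutes {1..n}" "evenperm \<sigma>" "i \<in> {1..n}" "smono ({1..n} - {i}) \<sigma>"
  shows "even i \<longleftrightarrow> even (\<sigma> i)"
proof -
  let ?j = "\<sigma> i"
  have j: "?j \<in> {1..n}" using assms(3) permutes_in_image[OF assms(1)] by simp
  have SP: "S i ?j permutes {1..n}" using S_permutes assms(3) j by blast
  have img: "\<sigma> ` ({1..n} - {i}) = S i ?j ` ({1..n} - {i})"
    using permutes_image_minus[OF assms(1)] permutes_image_minus[OF SP] S_at by simp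
  have agree: "\<forall>x\<in>{1..n} - {i}. \<sigma> x = S i ?j x"
    by (rule uniq[OF assms(4) S_smono img])
  have "\<sigma> = S i ?j"
  proof
    fix x show "\<sigma> x = S i ?j x"
    proof (cases "x \<in> {1..n}")
      case True then show ?thesis using agree S_at by (cases "x = i") auto
    next
      case False then show ?thesis using permutes_not_in[OF assms(1), of x] permutes_not_in[OF SP, of x] by simp
    qed
  qed
  then have e: "evenperm (S i ?j)" using assms(2) by metis
  show ?thesis using S_even[of i ?j] e by simp
qed


definition restr :: "nat set \<Rightarrow> (nat \<Rightarrow> nat) \<Rightarrow> (nat \<rightharpoonup> nat)" where
  "restr A \<sigma> = (\<lambda>x. if x \<in> A then Some (\<sigma> x) else None)"

lemma dom_restr[simp]: "dom (restr A \<sigma>) = A"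
  unfolding restr_def dom_def by auto

lemma ran_restr[simp]: "ran (restr A \<sigma>) = \<sigma> ` A"
  unfolding restr_def ran_def by (auto split: if_splits)

lemma restr_AO:
  assumes "A \<subseteq> {1..n}" "\<sigma> permutes {1..n}" "evenperm \<sigma>" "smono A \<sigma>"
  shows "restr A \<sigma> \<in> AO_n n"
proof -
  have inj: "inj_on (restr A \<sigma>) A"
    using permutes_inj[OF assms(2)] unfolding restr_def inj_on_def inj_def by auto
  have ran: "\<sigma> ` A \<subseteq> {1..n}" using assms(1) permutes_in_image[OF assms(2)] by auto
  have "restr A \<sigma> \<in> I_n n" unfolding I_n_def using assms(1) inj ran by simp
  moreover have "\<forall>x \<in> dom (restr A \<sigma>). restr A \<sigma> x = Some (\<sigma> x)"
    unfolding dom_restr by (simp add: restr_def)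
  moreover have "\<forall>x \<in> dom (restr A \<sigma>). \<forall>y \<in> dom (restr A \<sigma>). x < y \<longrightarrow> the (restr A \<sigma> x) < the (restr A \<sigma> y)"
    using assms(4) unfolding dom_restr unfolding smono_def restr_def by simp
  ultimately show ?thesis unfolding AO_n_def AI_n_def POI_n_def using assms(2,3) by blast
qed

lemma AO_restr:
  assumes "\<alpha> \<in> AO_n n"
  shows "\<exists>\<sigma>. \<sigma> permutes {1..n} \<and> evenperm \<sigma> \<and> smono (dom \<alpha>) \<sigma> \<and> dom \<alpha> \<subseteq> {1..n} \<and> \<alpha> = restr (dom \<alpha>) \<sigma>"
proof -
  from assms obtain \<sigma> where s: "\<sigma> permutes {1..n}" "evenperm \<sigma>" "\<forall>x \<in> dom \<alpha>. \<alpha> x = Some (\<sigma> x)"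
    and d: "dom \<alpha> \<subseteq> {1..n}"
    and m: "\<forall>x \<in> dom \<alpha>. \<forall>y \<in> dom \<alpha>. x < y \<longrightarrow> the (\<alpha> x) < the (\<alpha> y)"
    unfolding AO_n_def AI_n_def POI_n_def I_n_def by blast
  have "\<alpha> = restr (dom \<alpha>) \<sigma>"
  proof
    fix x show "\<alpha> x = restr (dom \<alpha>) \<sigma> x"
      using s(3) unfolding restr_def by (cases "x \<in> dom \<alpha>") (auto simp: domIff)
  qed
  moreover have "smono (dom \<alpha>) \<sigma>" using m s(3) unfolding smono_def by simp
  ultimately show ?thesis using s d by blast
qed

lemma comp_restr: "pmult (restr A \<sigma>) (restr B \<tau>) = restr {x\<in>A. \<sigma> x \<in> B} (\<tau> \<circ> \<sigma>)"
  unfolding pmult_def restr_def by (rule ext) (auto simp: map_comp_def)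

lemma AO_closed:
  assumes "a \<in> AO_n n" "b \<in> AO_n n"
  shows "pmult a b \<in> AO_n n"
proof -
  obtain \<sigma> where s: "\<sigma> permutes {1..n}" "evenperm \<sigma>" "smono (dom a) \<sigma>" "dom a \<subseteq> {1..n}" "a = restr (dom a) \<sigma>"
    using AO_restr[OF assms(1)] by blast
  obtain \<tau> where t: "\<tau> permutes {1..n}" "evenperm \<tau>" "smono (dom b) \<tau>" "dom b \<subseteq> {1..n}" "b = restr (dom b) \<tau>"
    using AO_restr[OF assms(2)] by blast
  have e: "evenperm (\<tau> \<circ> \<sigma>)"
    using evenperm_comp[OF permutes_imp_permutation[OF _ t(1)] permutes_imp_permutation[OF _ s(1)]] s(2) t(2) by simp
  have m: "smono {x\<in>dom a. \<sigma> x \<in> dom b} (\<tau> \<circ> \<sigma>)"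
    using s(3) t(3) unfolding smono_def by auto
  have "restr {x\<in>dom a. \<sigma> x \<in> dom b} (\<tau> \<circ> \<sigma>) \<in> AO_n n"
    by (rule restr_AO) (use s(4) permutes_compose[OF s(1) t(1)] e m in auto)
  then show ?thesis using comp_restr s(5) t(5) by metis
qed

lemma pmult_assoc: "pmult (pmult a b) c = pmult a (pmult b c)"
  unfolding pmult_def
proof
  fix x show "(c \<circ>\<^sub>m (b \<circ>\<^sub>m a)) x = ((c \<circ>\<^sub>m b) \<circ>\<^sub>m a) x"
    by (cases "a x") (simp_all add: map_comp_def)
qed

lemma idn_AO: "restr {1..n} id \<in> AO_n n"
  by (rule restr_AO) (auto simp: smono_def permutes_id)

lemma idn_left: "dom a \<subseteq> {1..n} \<Longrightarrow> pmult (restr {1..n} id) a = a"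
  unfolding pmult_def
proof
  fix x assume d: "dom a \<subseteq> {1..n}"
  show "(a \<circ>\<^sub>m restr {1..n} id) x = a x"
  proof (cases "x \<in> {1..n}")
    case True then show ?thesis by (simp add: restr_def)
  next
    case False then have "a x = None" using d by blast
    then show ?thesis using False by (simp add: restr_def)
  qed
qed

lemma I_ran: "a \<in> AO_n n \<Longrightarrow> ran a \<subseteq> {1..n}"
  unfolding AO_n_def AI_n_def I_n_def by auto

lemma idn_right: "ran a \<subseteq> {1..n} \<Longrightarrow> pmult a (restr {1..n} id) = a"
  unfolding pmult_def
proof
  fix x assume d: "ran a \<subseteq> {1..n}"
  show "(restr {1..n} id \<circ>\<^sub>m a) x = a x"
  proof (cases "a x")
    case None then show ?thesis by simp
  next
    case (Some y) then have "y \<in> {1..n}" using d ranI by fast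
    then show ?thesis using Some by (simp add: restr_def)
  qed
qed

lemma self_in: "a \<in> AO_n n \<Longrightarrow> a \<in> AO_ideal n a"
proof -
  assume a: "a \<in> AO_n n"
  have d: "dom a \<subseteq> {1..n}" using a unfolding AO_n_def AI_n_def I_n_def by blast
  have "a = pmult (pmult (restr {1..n} id) a) (restr {1..n} id)"
    using idn_left[OF d] idn_right[OF I_ran[OF a]] by simp
  then show ?thesis using idn_AO unfolding AO_ideal_def by blast
qed

lemma ideal_mono:
  assumes "a \<in> AO_ideal n b" shows "AO_ideal n a \<subseteq> AO_ideal n b"
proof
  fix x assume "x \<in> AO_ideal n a"
  then obtain s t where st: "s \<in> AO_n n" "t \<in> AO_n n" "x = pmult (pmult s a) t"
    unfolding AO_ideal_def by blast
  obtain s' t' where st': "s' \<in> AO_n n" "t' \<in> AO_n n" "a = pmult (pmult s' b) t'"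
    using assms unfolding AO_ideal_def by blast
  have "x = pmult (pmult (pmult s s') b) (pmult t' t)"
    using st(3) st'(3) pmult_assoc by metis
  moreover have "pmult s s' \<in> AO_n n" "pmult t' t \<in> AO_n n"
    using AO_closed st st' by auto
  ultimately show "x \<in> AO_ideal n b" unfolding AO_ideal_def by blast
qed


lemma rank_lemma:
  assumes "\<alpha> \<in> AO_n n" "prank \<alpha> = n - 1" "n \<ge> 2"
  shows "\<exists>i \<sigma>. i \<in> {1..n} \<and> \<sigma> permutes {1..n} \<and> evenperm \<sigma> \<and> smono ({1..n} - {i}) \<sigma>
     \<and> \<alpha> = restr ({1..n} - {i}) \<sigma> \<and> dpt n \<alpha> = i"
proof -
  obtain \<sigma> where s: "\<sigma> permutes {1..n}" "evenperm \<sigma>" "smono (dom \<alpha>) \<sigma>" "dom \<alpha> \<subseteq> {1..n}" "\<alpha> = restr (dom \<alpha>) \<sigma>"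
    using AO_restr[OF assms(1)] by blast
  have r: "ran \<alpha> = \<sigma> ` dom \<alpha>" by (subst s(5)) simp
  have "inj_on \<sigma> (dom \<alpha>)" using permutes_inj[OF s(1)] inj_on_subset by blast
  then have "card (ran \<alpha>) = card (dom \<alpha>)" unfolding r by (rule card_image)
  then have cd: "card (dom \<alpha>) = n - 1" using assms(2) unfolding prank_def by simp
  have "{1..n} - dom \<alpha> \<noteq> {}"
  proof
    assume "{1..n} - dom \<alpha> = {}"
    then have "dom \<alpha> = {1..n}" using s(4) by blast
    then show False using cd assms(3) by simp
  qed
  then obtain i where i: "i \<in> {1..n}" "i \<notin> dom \<alpha>" by blast
  have sub: "dom \<alpha> \<subseteq> {1..n} - {i}" using s(4) i by blast
  have "card ({1..n} - {i}) = n - 1" using i by simp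
  then have deq: "dom \<alpha> = {1..n} - {i}"
    using card_subset_eq[OF _ sub] cd by simp
  have "dpt n \<alpha> = i"
    unfolding dpt_def by (rule the_equality) (use i deq in auto)
  have "\<alpha> = restr ({1..n} - {i}) \<sigma>" using s(5) deq by simp
  moreover have "smono ({1..n} - {i}) \<sigma>" using s(3) deq by simp
  ultimately show ?thesis using i(1) s(1,2) \<open>dpt n \<alpha> = i\<close> by blast
qed

lemma constr:
  fixes n i i' :: nat and \<sigma> \<sigma>' :: "nat \<Rightarrow> nat" and \<alpha> \<beta> :: "nat \<rightharpoonup> nat"
  assumes par: "even i \<longleftrightarrow> even i'"
  assumes a: "i \<in> {1..n}" "\<sigma> permutes {1..n}" "smono ({1..n} - {i}) \<sigma>" "\<alpha> = restr ({1..n} - {i}) \<sigma>"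
  assumes b: "i' \<in> {1..n}" "\<sigma>' permutes {1..n}" "smono ({1..n} - {i'}) \<sigma>'" "\<beta> = restr ({1..n} - {i'}) \<sigma>'"
  assumes pa: "even i \<longleftrightarrow> even (\<sigma> i)" and pb: "even i' \<longleftrightarrow> even (\<sigma>' i')"
  shows "\<beta> \<in> AO_ideal n \<alpha>"
proof -
  let ?O = "{1..n::nat}"
  have ja: "\<sigma> i \<in> ?O" using a(1) permutes_in_image[OF a(2)] by simp
  have jb: "\<sigma>' i' \<in> ?O" using b(1) permutes_in_image[OF b(2)] by simp
  let ?s = "restr (?O - {i'}) (S i' i)"
  let ?t = "restr (?O - {\<sigma> i}) (S (\<sigma> i) (\<sigma>' i'))"
  have P1: "S i' i permutes ?O" using S_permutes a(1) b(1) by blast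
  have P2: "S (\<sigma> i) (\<sigma>' i') permutes ?O" using S_permutes ja jb by blast
  have s: "?s \<in> AO_n n"
    by (rule restr_AO) (use P1 S_even par S_smono in auto)
  have t: "?t \<in> AO_n n"
    by (rule restr_AO) (use P2 S_even par pa pb S_smono in auto)
  have im1: "S i' i ` (?O - {i'}) = ?O - {i}" using permutes_image_minus[OF P1] S_at by simp
  have im2: "\<sigma> ` (?O - {i}) = ?O - {\<sigma> i}" using permutes_image_minus[OF a(2)] by simp
  have im3: "S (\<sigma> i) (\<sigma>' i') ` (?O - {\<sigma> i}) = ?O - {\<sigma>' i'}" using permutes_image_minus[OF P2] S_at by simp
  have im4: "\<sigma>' ` (?O - {i'}) = ?O - {\<sigma>' i'}" using permutes_image_minus[OF b(2)] by simp
  have D: "{x \<in> {x \<in> ?O - {i'}. S i' i x \<in> ?O - {i}}. (\<sigma> \<circ> S i' i) x \<in> ?O - {\<sigma> i}} = ?O - {i'}"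
  proof -
    have m1: "\<forall>x\<in>?O-{i'}. S i' i x \<in> ?O-{i}" using im1 by blast
    have m2: "\<forall>y\<in>?O-{i}. \<sigma> y \<in> ?O-{\<sigma> i}" using im2 by blast
    show ?thesis using m1 m2 unfolding comp_apply by blast
  qed
  let ?f = "S (\<sigma> i) (\<sigma>' i') \<circ> (\<sigma> \<circ> S i' i)"
  have fm: "smono (?O - {i'}) ?f"
    unfolding smono_def
  proof (intro ballI impI)
    fix x y assume x: "x \<in> ?O - {i'}" and y: "y \<in> ?O - {i'}" and xy: "x < y"
    have 1: "S i' i x < S i' i y" using S_mono x y xy by blast
    have 2: "S i' i x \<in> ?O - {i}" "S i' i y \<in> ?O - {i}" using im1 x y by blast+
    have 3: "\<sigma> (S i' i x) < \<sigma> (S i' i y)" using a(3) 1 2 unfolding smono_def by blast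
    have 4: "\<sigma> (S i' i x) \<in> ?O - {\<sigma> i}" "\<sigma> (S i' i y) \<in> ?O - {\<sigma> i}" using im2 2 by blast+
    have "S (\<sigma> i) (\<sigma>' i') (\<sigma> (S i' i x)) < S (\<sigma> i) (\<sigma>' i') (\<sigma> (S i' i y))"
      using S_mono 3 4 by blast
    then show "?f x < ?f y" by simp
  qed
  have fi: "?f ` (?O - {i'}) = ?O - {\<sigma>' i'}"
  proof -
    have "?f ` (?O - {i'}) = S (\<sigma> i) (\<sigma>' i') ` (\<sigma> ` (S i' i ` (?O - {i'})))"
      by (simp only: image_comp)
    then show ?thesis by (simp only: im1 im2 im3)
  qed
  have agree: "\<forall>x \<in> ?O - {i'}. ?f x = \<sigma>' x"
    by (rule uniq[OF fm b(3)]) (use fi im4 in simp)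
  have "pmult (pmult ?s \<alpha>) ?t = restr (?O - {i'}) ?f"
    unfolding a(4) comp_restr D ..
  also have "\<dots> = \<beta>" unfolding b(4)
  proof
    fix x show "restr (?O - {i'}) ?f x = restr (?O - {i'}) \<sigma>' x"
      using agree by (simp add: restr_def)
  qed
  finally show ?thesis unfolding AO_ideal_def using s t by blast
qed

theorem proposition1p3:
  fixes n :: nat and \<alpha> \<beta> :: "nat \<rightharpoonup> nat"
  assumes "n \<ge> 2"
    and "\<alpha> \<in> AO_n n" and "\<beta> \<in> AO_n n"
    and "prank \<alpha> = n - 1" and "prank \<beta> = n - 1"
  shows "J_AO n \<alpha> \<beta> \<longleftrightarrow> (even (dpt n \<alpha>) \<longleftrightarrow> even (dpt n \<beta>))"
proof -
  let ?O = "{1..n::nat}"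
  obtain i \<sigma> where a: "i \<in> ?O" "\<sigma> permutes ?O" "evenperm \<sigma>" "smono (?O - {i}) \<sigma>"
     "\<alpha> = restr (?O - {i}) \<sigma>" "dpt n \<alpha> = i"
    using rank_lemma[OF assms(2,4,1)] by blast
  obtain i' \<sigma>' where b: "i' \<in> ?O" "\<sigma>' permutes ?O" "evenperm \<sigma>'" "smono (?O - {i'}) \<sigma>'"
     "\<beta> = restr (?O - {i'}) \<sigma>'" "dpt n \<beta> = i'"
    using rank_lemma[OF assms(3,5,1)] by blast
  have pa: "even i \<longleftrightarrow> even (\<sigma> i)" by (rule parity[OF a(2,3,1,4)])
  have pb: "even i' \<longleftrightarrow> even (\<sigma>' i')" by (rule parity[OF b(2,3,1,4)])
  have ja: "\<sigma> i \<in> ?O" using a(1) permutes_in_image[OF a(2)] by simp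
  have jb: "\<sigma>' i' \<in> ?O" using b(1) permutes_in_image[OF b(2)] by simp
  show ?thesis
  proof
    assume J: "J_AO n \<alpha> \<beta>"
    have "\<beta> \<in> AO_ideal n \<alpha>" using J self_in[OF assms(3)] unfolding J_AO_def by simp
    then obtain s t where st: "s \<in> AO_n n" "t \<in> AO_n n" "\<beta> = pmult (pmult s \<alpha>) t"
      unfolding AO_ideal_def by blast
    obtain \<sigma>1 where s1: "\<sigma>1 permutes ?O" "evenperm \<sigma>1" "smono (dom s) \<sigma>1" "dom s \<subseteq> ?O" "s = restr (dom s) \<sigma>1"
      using AO_restr[OF st(1)] by blast
    obtain \<sigma>2 where s2: "t = restr (dom t) \<sigma>2"
      using AO_restr[OF st(2)] by blast
    define A1 where "A1 = dom s"
    define A2 where "A2 = dom t"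
    have sA: "s = restr A1 \<sigma>1" unfolding A1_def by (rule s1(5))
    have tA: "t = restr A2 \<sigma>2" unfolding A2_def by (rule s2)
    have "\<beta> = restr {x \<in> {x \<in> A1. \<sigma>1 x \<in> ?O - {i}}. (\<sigma> \<circ> \<sigma>1) x \<in> A2} (\<sigma>2 \<circ> (\<sigma> \<circ> \<sigma>1))"
      unfolding st(3) sA tA a(5) comp_restr ..
    then have "dom \<beta> = {x \<in> {x \<in> A1. \<sigma>1 x \<in> ?O - {i}}. (\<sigma> \<circ> \<sigma>1) x \<in> A2}"
      by (simp only: dom_restr)
    then have dd: "?O - {i'} = {x \<in> {x \<in> A1. \<sigma>1 x \<in> ?O - {i}}. (\<sigma> \<circ> \<sigma>1) x \<in> A2}"
      unfolding b(5) dom_restr .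
    have mem: "x \<in> A1 \<and> \<sigma>1 x \<noteq> i" if x: "x \<in> ?O - {i'}" for x
    proof -
      have "x \<in> {x \<in> {x \<in> A1. \<sigma>1 x \<in> ?O - {i}}. (\<sigma> \<circ> \<sigma>1) x \<in> A2}"
        using x unfolding dd .
      then show ?thesis by simp
    qed
    have sub: "?O - {i'} \<subseteq> dom s"
    proof
      fix x assume "x \<in> ?O - {i'}"
      from mem[OF this] show "x \<in> dom s" unfolding A1_def by simp
    qed
    have "\<sigma>1 i' = i"
    proof (rule ccontr)
      assume ne: "\<sigma>1 i' \<noteq> i"
      have "i \<in> \<sigma>1 ` ?O" using a(1) permutes_image[OF s1(1)] by simp
      then obtain y where y: "y \<in> ?O" "\<sigma>1 y = i" by (rule imageE) simp
      then have "y \<noteq> i'" using ne by auto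
      then have "y \<in> ?O - {i'}" using y(1) by simp
      then show False using mem y(2) by blast
    qed
    moreover have "smono (?O - {i'}) \<sigma>1" by (rule smono_subset[OF s1(3) sub])
    ultimately have "even i' \<longleftrightarrow> even i" using parity[OF s1(1,2) b(1)] by simp
    then show "even (dpt n \<alpha>) \<longleftrightarrow> even (dpt n \<beta>)" using a(6) b(6) by simp
  next
    assume "even (dpt n \<alpha>) \<longleftrightarrow> even (dpt n \<beta>)"
    then have par: "even i \<longleftrightarrow> even i'" using a(6) b(6) by simp
    have "\<beta> \<in> AO_ideal n \<alpha>"
      by (rule constr[OF par a(1,2,4,5) b(1,2,4,5) pa pb])
    moreover have "\<alpha> \<in> AO_ideal n \<beta>"
      by (rule constr[OF par[symmetric] b(1,2,4,5) a(1,2,4,5) pb pa])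
    ultimately show "J_AO n \<alpha> \<beta>" unfolding J_AO_def using ideal_mono by blast
  qed
qed

end
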